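(* Let $\mathbb{R}^3$ carry the Euclidean dot product $\cdot$, cross product $\times$ and norm $|\cdot|$. For $\mathbf r\neq \mathbf 0$ and $\mathbf u,\mathbf w\in\mathbb{R}^3$ define $$\mathbf f(\mathbf r,\mathbf u,\mathbf w)\triangleq\Big(\mathbf w\cdot\tfrac{\mathbf r}{|\mathbf r|}\Big)\mathbf u+\Big(\mathbf u\cdot\tfrac{\mathbf r}{|\mathbf r|}\Big)\mathbf w+\Big[(\mathbf u\cdot\mathbf w)-5\Big(\mathbf u\cdot\tfrac{\mathbf r}{|\mathbf r|}\Big)\Big(\mathbf w\cdot\tfrac{\mathbf r}{|\mathbf r|}\Big)\Big]\tfrac{\mathbf r}{|\mathbf r|}.$$ For $\mathbf r\neq\mathbf 0$ and $\mathbf f^*\in\mathbb{R}^3$ define $$\Phi_1(\mathbf r,\mathbf f^* )\triangleq\sqrt{|\mathbf r\times\mathbf f^*|^2+|\mathbf r|^2|\mathbf f^*|^2},\qquad \Phi_2(\mathbf r,\mathbf f^* )\triangleq\big(2-\operatorname{sgn}(\mathbf r\cdot\mathbf f^* )^2\big)\Phi_1(\mathbf r,\mathbf f^* ),$$ $$g_{\mathrm r}\triangleq-\frac{\operatorname{sgn}(\mathbf r\cdot\mathbf f^* )}{2}\Big(\frac{|\mathbf r\cdot\mathbf f^*|+\Phi_1}{|\mathbf r|}\Big)^{1/2},\qquad g_{\mathrm{rf}}\triangleq\frac{1}{\sqrt2}\Big(\frac{-|\mathbf r\cdot\mathbf f^*|+\Phi_2}{|\mathbf r|}\Big)^{1/2},$$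 $$h_{\mathrm r}\triangleq\frac12\Big(\frac{|\mathbf r\cdot\mathbf f^*|+\Phi_2}{|\mathbf r|}\Big)^{1/2},\qquad h_{\mathrm{rf}}\triangleq-\frac{\operatorname{sgn}(\mathbf r\cdot\mathbf f^* )}{\sqrt2}\Big(\frac{-|\mathbf r\cdot\mathbf f^*|+\Phi_1}{|\mathbf r|}\Big)^{1/2},$$ where all of these are evaluated at $(\mathbf r,\mathbf f^* )$. Define $$\mathbf g(\mathbf r,\mathbf f^* )\triangleq\begin{cases}\frac{g_{\mathrm r}}{|\mathbf r|}\mathbf r+\frac{g_{\mathrm{rf}}}{|\mathbf r||\mathbf r\times\mathbf f^*|}\big((\mathbf r\times\mathbf f^* )\times\mathbf r\big), & \mathbf r\times\mathbf f^*\neq\mathbf 0,\\ \frac{g_{\mathrm r}}{|\mathbf r|}\mathbf r, & \mathbf r\times\mathbf f^*=\mathbf 0,\end{cases}$$ $$\mathbf h(\mathbf r,\mathbf f^* )\triangleq\begin{cases}\frac{h_{\mathrm r}}{|\mathbf r|}\mathbf r+\frac{h_{\mathrm{rf}}}{|\mathbf r||\mathbf r\times\mathbf f^*|}\big((\mathbf r\times\mathbf f^* )\times\mathbf r\big), & \mathbf r\times\mathbf f^*\neq\mathbf 0,\\ \frac{h_{\mathrm r}}{|\mathbf r|}\mathbf r, & \mathbf r\times\mathbf f^*=\mathbf 0.\end{cases}$$ Then for all $\mathbf f^*\in\mathbb{R}^3$ and all $\mathbf r\in\mathbb{R}^3$ with $\mathbf r\neq\mathbf 0$, $$\mathbf f\big(\mathbf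 r,\mathbf g(\mathbf r,\mathbf f^* ),\mathbf h(\mathbf r,\mathbf f^* )\big)=\mathbf f^*.$$
   Context: $\operatorname{sgn}$ denotes the sign function with $\operatorname{sgn}(x)=1$ for $x>0$, $\operatorname{sgn}(x)=-1$ for $x<0$, and $\operatorname{sgn}(0)=0$; square roots are nonnegative real square roots. The function $\mathbf f$ is (up to a positive factor) the magnetic dipole–dipole force exerted on a dipole of moment $\mathbf u$ at relative position $\mathbf r$ by a dipole of moment $\mathbf w$; $\mathbf g,\mathbf h$ give a pair of dipole amplitudes producing a prescribed force value $\mathbf f^*$. *)

theory Defs
  imports "HOL-Analysis.Analysis"
begin

definition dip_f :: "real^3 \<Rightarrow> real^3 \<Rightarrow> real^3 \<Rightarrow> real^3" where
  "dip_f r u w = (let e = (1 / norm r) *\<^sub>R r in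
     (w \<bullet> e) *\<^sub>R u + (u \<bullet> e) *\<^sub>R w + ((u \<bullet> w) - 5 * (u \<bullet> e) * (w \<bullet> e)) *\<^sub>R e)"

definition Phi1 :: "real^3 \<Rightarrow> real^3 \<Rightarrow> real" where
  "Phi1 r fs = sqrt ((norm (cross3 r fs))\<^sup>2 + (norm r)\<^sup>2 * (norm fs)\<^sup>2)"

definition Phi2 :: "real^3 \<Rightarrow> real^3 \<Rightarrow> real" where
  "Phi2 r fs = (2 - (sgn (r \<bullet> fs))\<^sup>2) * Phi1 r fs"

definition g_r :: "real^3 \<Rightarrow> real^3 \<Rightarrow> real" where
  "g_r r fs = - (sgn (r \<bullet> fs) / 2) * sqrt ((\<bar>r \<bullet> fs\<bar> + Phi1 r fs) / norm r)"

definition g_rf :: "real^3 \<Rightarrow> real^3 \<Rightarrow> real" where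
  "g_rf r fs = (1 / sqrt 2) * sqrt ((- \<bar>r \<bullet> fs\<bar> + Phi2 r fs) / norm r)"

definition h_r :: "real^3 \<Rightarrow> real^3 \<Rightarrow> real" where
  "h_r r fs = (1 / 2) * sqrt ((\<bar>r \<bullet> fs\<bar> + Phi2 r fs) / norm r)"

definition h_rf :: "real^3 \<Rightarrow> real^3 \<Rightarrow> real" where
  "h_rf r fs = - (sgn (r \<bullet> fs) / sqrt 2) * sqrt ((- \<bar>r \<bullet> fs\<bar> + Phi1 r fs) / norm r)"

definition dip_g :: "real^3 \<Rightarrow> real^3 \<Rightarrow> real^3" where
  "dip_g r fs = (if cross3 r fs \<noteq> 0
     then (g_r r fs / norm r) *\<^sub>R r
          + (g_rf r fs / (norm r * norm (cross3 r fs))) *\<^sub>R cross3 (cross3 r fs) r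
     else (g_r r fs / norm r) *\<^sub>R r)"

definition dip_h :: "real^3 \<Rightarrow> real^3 \<Rightarrow> real^3" where
  "dip_h r fs = (if cross3 r fs \<noteq> 0
     then (h_r r fs / norm r) *\<^sub>R r
          + (h_rf r fs / (norm r * norm (cross3 r fs))) *\<^sub>R cross3 (cross3 r fs) r
     else (h_r r fs / norm r) *\<^sub>R r)"

end

theory Submission imports Defs begin

lemma triple: "cross3 (cross3 r fs) r = (r \<bullet> r) *\<^sub>R fs - (r \<bullet> fs) *\<^sub>R r"
  by (simp add: cross3_simps forall_3)

lemma normc: "(norm (cross3 r fs))\<^sup>2 = (norm r)\<^sup>2 * (norm fs)\<^sup>2 - (r \<bullet> fs)\<^sup>2"
  using norm_cross_dot[of r fs] by (simp add: power_mult_distrib)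

lemma fgen:
  fixes e t :: "real^3"
  assumes "e \<bullet> e = 1" "t \<bullet> t = 1" "e \<bullet> t = 0" "(1 / norm r) *\<^sub>R r = e"
  shows "dip_f r (u1 *\<^sub>R e + u2 *\<^sub>R t) (w1 *\<^sub>R e + w2 *\<^sub>R t)
       = (u2*w2 - 2*u1*w1) *\<^sub>R e + (w1*u2+u1*w2) *\<^sub>R t"
proof -
  have te: "t \<bullet> e = 0" using assms(3) by (simp add: inner_commute)
  show ?thesis unfolding dip_f_def Let_def assms(4)
    by (simp add: inner_add_left inner_add_right assms te vec_eq_iff algebra_simps)
qed

lemma scal:
  fixes a b :: real
  assumes "b \<ge> 0" "P = sqrt (a\<^sup>2 + 2*b\<^sup>2)"
  defines "s \<equiv> sgn a"
  defines "u1 \<equiv> - (s/2) * sqrt (\<bar>a\<bar> + P)"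
  defines "u2 \<equiv> (1 / sqrt 2) * sqrt (- \<bar>a\<bar> + (2 - s\<^sup>2) * P)"
  defines "w1 \<equiv> (1/2) * sqrt (\<bar>a\<bar> + (2 - s\<^sup>2) * P)"
  defines "w2 \<equiv> - (s / sqrt 2) * sqrt (- \<bar>a\<bar> + P)"
  shows "u2*w2 - 2*u1*w1 = a" "w1*u2+u1*w2 = b"
proof -
  have Pa: "\<bar>a\<bar> \<le> P" unfolding assms(2) real_sqrt_abs[symmetric] by (rule real_sqrt_le_mono) simp  
  have PP: "P\<^sup>2 = a\<^sup>2 + 2*b\<^sup>2" "P \<ge> 0" using assms(2) by simp_all
  have "u2*w2 - 2*u1*w1 = a \<and> w1*u2+u1*w2 = b"
  proof (cases "a = 0")
    case True
    then have "P = sqrt 2 * b" using assms(1,2) by (simp add: real_sqrt_mult)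
    have Q: "sqrt (2*P) * sqrt (2*P) = 2*P" using PP(2) by simp
    have "w1*u2+u1*w2 = (1/(2 * sqrt 2)) * (sqrt (2*P) * sqrt (2*P))"
      unfolding u1_def u2_def w1_def w2_def s_def using True by simp
    also have "\<dots> = b" using Q \<open>P = sqrt 2 * b\<close> by simp
    finally show ?thesis using True unfolding u1_def u2_def w1_def w2_def s_def by simp
  next
    case False
    then have s2: "s\<^sup>2 = 1" unfolding s_def by (simp add: sgn_if)
    have sa: "s * \<bar>a\<bar> = a" unfolding s_def by (simp add: sgn_mult_abs)
    have A: "sqrt (\<bar>a\<bar> + P) * sqrt (\<bar>a\<bar> + P) = \<bar>a\<bar> + P" using Pa by simp
    have B: "sqrt (P - \<bar>a\<bar>) * sqrt (P - \<bar>a\<bar>) = P - \<bar>a\<bar>" using Pa by simp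
    have C: "sqrt (\<bar>a\<bar> + P) * sqrt (P - \<bar>a\<bar>) = sqrt 2 * b"
    proof -
      have "sqrt (\<bar>a\<bar> + P) * sqrt (P - \<bar>a\<bar>) = sqrt ((P + \<bar>a\<bar>) * (P - \<bar>a\<bar>))"
        by (simp add: real_sqrt_mult add.commute)
      also have "(P + \<bar>a\<bar>) * (P - \<bar>a\<bar>) = 2 * b\<^sup>2" using PP(1) by (simp add: algebra_simps power2_eq_square)
      finally show ?thesis using assms(1) by (simp add: real_sqrt_mult)
    qed
    have s2': "s * s = 1" using s2 by (simp add: power2_eq_square)
    have "u2*w2 - 2*u1*w1 = s * (\<bar>a\<bar> + P)/2 - s * (P - \<bar>a\<bar>)/2"
      unfolding u1_def u2_def w1_def w2_def using s2 A B
      by (simp add: algebra_simps) (simp add: field_simps)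
    also have "\<dots> = a" using sa by (simp add: algebra_simps) (simp add: field_simps)
    finally have 1: "u2*w2 - 2*u1*w1 = a" .
    have "w1*u2+u1*w2 = (1 + s * s) / (2 * sqrt 2) * (sqrt (\<bar>a\<bar> + P) * sqrt (P - \<bar>a\<bar>))"
      unfolding u1_def u2_def w1_def w2_def using s2
      by (simp add: algebra_simps add_divide_distrib)
    also have "\<dots> = b" using C s2' by simp
    finally show ?thesis using 1 by simp
  qed
  then show "u2*w2 - 2*u1*w1 = a" "w1*u2+u1*w2 = b" by simp_all
qed

lemma fgen1:
  fixes e :: "real^3"
  assumes "e \<bullet> e = 1" "(1 / norm r) *\<^sub>R r = e"
  shows "dip_f r (u1 *\<^sub>R e) (w1 *\<^sub>R e) = (- 2*u1*w1) *\<^sub>R e"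
  unfolding dip_f_def Let_def assms(2)
  by (simp add: assms vec_eq_iff algebra_simps)

theorem proposition2:
  fixes r fs :: "real^3"
  assumes "r \<noteq> 0"
  shows "dip_f r (dip_g r fs) (dip_h r fs) = fs"
proof -
  define n where "n = norm r"
  define d where "d = r \<bullet> fs"
  define C where "C = norm (cross3 r fs)"
  define e where "e = (1 / n) *\<^sub>R r"
  define a where "a = d / n"
  define b where "b = C / n"
  define P where "P = sqrt (a\<^sup>2 + 2*b\<^sup>2)"
  have n0: "n > 0" using assms unfolding n_def by simp
  have b0: "b \<ge> 0" unfolding b_def C_def using n0 by simp
  have rr: "r \<bullet> r = n\<^sup>2" unfolding n_def by (simp add: power2_norm_eq_inner)
  have ee: "e \<bullet> e = 1" unfolding e_def using rr n0 by (simp add: power2_eq_square)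
  have er: "(1 / norm r) *\<^sub>R r = e" unfolding e_def n_def ..
  have C2: "C\<^sup>2 = n\<^sup>2 * (norm fs)\<^sup>2 - d\<^sup>2" unfolding C_def n_def d_def by (rule normc)
  have Phi: "Phi1 r fs = n * P"
  proof -
    have "Phi1 r fs = sqrt (2 * C\<^sup>2 + d\<^sup>2)" unfolding Phi1_def C_def[symmetric] n_def[symmetric]
      using C2 by (simp add: algebra_simps)
    also have "2 * C\<^sup>2 + d\<^sup>2 = n\<^sup>2 * (a\<^sup>2 + 2*b\<^sup>2)" unfolding a_def b_def using n0
      by (simp add: field_simps)
    also have "sqrt \<dots> = n * P" unfolding P_def using n0 by (simp add: real_sqrt_mult)
    finally show ?thesis .
  qed
  have sg: "sgn d = sgn a" unfolding a_def using n0 by (simp add: sgn_divide)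
  have ad: "\<bar>d\<bar> / n = \<bar>a\<bar>" unfolding a_def using n0 by simp
  have Q1: "(\<bar>d\<bar> + n * P) / n = \<bar>a\<bar> + P" "(- \<bar>d\<bar> + n * P) / n = - \<bar>a\<bar> + P"
    "(\<bar>d\<bar> + (2 - (sgn a)\<^sup>2) * (n * P)) / n = \<bar>a\<bar> + (2 - (sgn a)\<^sup>2) * P"
    "(- \<bar>d\<bar> + (2 - (sgn a)\<^sup>2) * (n * P)) / n = - \<bar>a\<bar> + (2 - (sgn a)\<^sup>2) * P"
    using n0 ad by (simp_all add: field_simps)
  define u1 where "u1 = - (sgn a/2) * sqrt (\<bar>a\<bar> + P)"
  define u2 where "u2 = (1 / sqrt 2) * sqrt (- \<bar>a\<bar> + (2 - (sgn a)\<^sup>2) * P)"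
  define w1 where "w1 = (1/2) * sqrt (\<bar>a\<bar> + (2 - (sgn a)\<^sup>2) * P)"
  define w2 where "w2 = - (sgn a / sqrt 2) * sqrt (- \<bar>a\<bar> + P)"
  have gr: "g_r r fs = u1" unfolding g_r_def u1_def Phi d_def[symmetric] n_def[symmetric] sg Q1 ..
  have grf: "g_rf r fs = u2" unfolding g_rf_def u2_def Phi2_def Phi d_def[symmetric] n_def[symmetric] sg Q1 ..
  have hr: "h_r r fs = w1" unfolding h_r_def w1_def Phi2_def Phi d_def[symmetric] n_def[symmetric] sg Q1 ..
  have hrf: "h_rf r fs = w2" unfolding h_rf_def w2_def Phi d_def[symmetric] n_def[symmetric] sg Q1 ..
  have S: "u2*w2 - 2*u1*w1 = a" "w1*u2+u1*w2 = b"
    using scal[OF b0 P_def] unfolding u1_def u2_def w1_def w2_def by simp_all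
  have tri: "cross3 (cross3 r fs) r = n\<^sup>2 *\<^sub>R fs - d *\<^sub>R r" unfolding triple rr d_def ..
  show ?thesis
  proof (cases "cross3 r fs = 0")
    case True
    have g: "dip_g r fs = u1 *\<^sub>R e" unfolding dip_g_def using True gr
      by (simp add: e_def n_def)
    have h: "dip_h r fs = w1 *\<^sub>R e" unfolding dip_h_def using True hr
      by (simp add: e_def n_def)
    have "n\<^sup>2 *\<^sub>R fs = d *\<^sub>R r" using tri True by simp
    then have "(1/n\<^sup>2) *\<^sub>R (n\<^sup>2 *\<^sub>R fs) = (1/n\<^sup>2) *\<^sub>R (d *\<^sub>R r)" by simp
    then have fse: "fs = a *\<^sub>R e" unfolding a_def e_def using n0
      by (simp add: power2_eq_square)
    have b00: "b = 0" unfolding b_def C_def using True by simp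
    have "w2 = 0" unfolding w2_def P_def b00 by simp
    then have uw: "- 2*u1*w1 = a" using S(1) by simp
    have "dip_f r (dip_g r fs) (dip_h r fs) = (- 2*u1*w1) *\<^sub>R e" unfolding g h by (rule fgen1[OF ee er])
    then show ?thesis unfolding uw using fse by simp
  next
    case False
    have C0: "C > 0" unfolding C_def using False by simp
    define t where "t = (1/(n*C)) *\<^sub>R cross3 (cross3 r fs) r"
    have nx: "norm (cross3 (cross3 r fs) r) = C * n"
    proof -
      have "(norm (cross3 (cross3 r fs) r))\<^sup>2 + ((cross3 r fs) \<bullet> r)\<^sup>2 = (C * n)\<^sup>2"
        using norm_cross_dot[of "cross3 r fs" r] unfolding C_def n_def .
      moreover have "(cross3 r fs) \<bullet> r = 0" using dot_cross_self(1)[of r fs]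
        by (simp add: inner_commute)
      ultimately have "(norm (cross3 (cross3 r fs) r))\<^sup>2 = (C * n)\<^sup>2" by simp
      then show ?thesis using C0 n0 by (simp add: power2_eq_iff_nonneg)
    qed
    have tt: "t \<bullet> t = 1" unfolding t_def using nx C0 n0
      by (simp add: power2_norm_eq_inner[symmetric] power2_eq_square)
    have et: "e \<bullet> t = 0" unfolding e_def t_def using dot_cross_self(2)[of r "cross3 r fs"]
      by simp
    have g: "dip_g r fs = u1 *\<^sub>R e + u2 *\<^sub>R t" unfolding dip_g_def using False gr grf
      by (simp add: e_def t_def n_def C_def)
    have h: "dip_h r fs = w1 *\<^sub>R e + w2 *\<^sub>R t" unfolding dip_h_def using False hr hrf
      by (simp add: e_def t_def n_def C_def)
    have fse: "a *\<^sub>R e + b *\<^sub>R t = fs" unfolding a_def b_def e_def t_def tri using n0 C0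
      by (simp add: vec_eq_iff field_simps power2_eq_square)
    have "dip_f r (dip_g r fs) (dip_h r fs) = (u2*w2 - 2*u1*w1) *\<^sub>R e + (w1*u2+u1*w2) *\<^sub>R t"
      unfolding g h by (rule fgen[OF ee tt et er])
    then show ?thesis unfolding S using fse by simp
  qed
qed

end
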